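(* Under the setting of the context, assume $P(z)$ is primitive, $\mathbf{x}_0\neq 0$, and $h_0(z)\neq 0$. Then there exist $w_{j,l-1}\in\mathbb{F}_2$ ($0\le j\le k(v)$, $1\le l\le v$), not all zero, with $\sum_{l=1}^{v}\sum_{j=0}^{k(v)} w_{j,l-1}y_{i+j,l-1}=0$ for all $i\ge0$; and for every integer $k$ with $0\le k<k(v)$, the only coefficients $w_{j,l-1}\in\mathbb{F}_2$ ($0\le j\le k$, $1\le l\le v$) satisfying $\sum_{l=1}^{v}\sum_{j=0}^{k} w_{j,l-1}y_{i+j,l-1}=0$ for all $i\ge 0$ are all zero.
   Context: An $\mathbb{F}_2$-linear generator: a $p\times p$ matrix $\mathbf{A}$ and $w\times p$ matrix $\mathbf{B}$ over $\mathbb{F}_2$, states $\mathbf{x}_i=\mathbf{A}\mathbf{x}_{i-1}$, outputs $\mathbf{y}_i=\mathbf{B}\mathbf{x}_i={}^t(y_{i,0},\dots,y_{i,w-1})$, and $u_i=\sum_{l=1}^w y_{i,l-1}2^{-l}\in[0,1)$; $P(z)=\det(\mathbf{I}z-\mathbf{A})$. Fix $1\le v\le w$. For $k\ge1$, let $\Psi_k$ be the multiset $\{(u_0,\dots,u_{k-1}) : \mathbf{x}_0\in\mathbb{F}_2^p\}$. Dividing $[0,1)$ into $2^v$ equal intervals partitions $[0,1)^k$ into $2^{kv}$ equal cubic cells; the generator is $k$-dimensionally equidistributed with $v$-bit accuracy if each cell contains exactly $2^{p-kv}$ points of $\Psi_k$, and $k(v)$ is the largest such $k$. Also $G_{l-1}(z):=\sum_{i\ge0}y_{i,l-1}z^{-i-1}=h_{l-1}(z)/P(z)$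 with $h_{l-1}\in\mathbb{F}_2[z]$ for the given nonzero $\mathbf{x}_0$. *)

theory Defs
  imports "HOL-Library.Z2" "Jordan_Normal_Form.Char_Poly"
begin

text \<open>An F2-linear generator: A is p x p, B is w x p, over the field bit (= F2).
  Coordinates are indexed from 0: y i l is the entry y_{i,l} (0 <= l < w).\<close>

definition state :: "bit mat \<Rightarrow> bit vec \<Rightarrow> nat \<Rightarrow> bit vec" where
  "state A x0 i = (A ^\<^sub>m i) *\<^sub>v x0"

definition outp :: "bit mat \<Rightarrow> bit mat \<Rightarrow> bit vec \<Rightarrow> nat \<Rightarrow> nat \<Rightarrow> bit" where
  "outp A B x0 i l = (B *\<^sub>v state A x0 i) $ l"

definition bit_val :: "bit \<Rightarrow> real" where
  "bit_val b = (if b = 1 then 1 else 0)"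

definition uval :: "bit mat \<Rightarrow> bit mat \<Rightarrow> nat \<Rightarrow> bit vec \<Rightarrow> nat \<Rightarrow> real" where
  "uval A B w x0 i = (\<Sum>l=1..w. bit_val (outp A B x0 i (l - 1)) * 2 powr (- real l))"

definition cell :: "nat \<Rightarrow> real \<Rightarrow> int" where
  "cell v u = \<lfloor>u * 2 ^ v\<rfloor>"

text \<open>k-dimensional equidistribution with v-bit accuracy: each of the 2^(kv) cubic cells,
  indexed by c : {0..<k} -> {0..<2^v}, contains exactly 2^(p-kv) points of the multiset
  Psi_k (points counted with multiplicity over all x0 in F2^p).\<close>
definition equidist :: "nat \<Rightarrow> bit mat \<Rightarrow> bit mat \<Rightarrow> nat \<Rightarrow> nat \<Rightarrow> nat \<Rightarrow> bool" where
  "equidist p A B w v k =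
     (\<forall>c :: nat \<Rightarrow> int. (\<forall>j<k. 0 \<le> c j \<and> c j < 2 ^ v) \<longrightarrow>
        real (card {x0 \<in> carrier_vec p. \<forall>j<k. cell v (uval A B w x0 j) = c j})
          = 2 powr (real p - real k * real v))"

definition kv :: "nat \<Rightarrow> bit mat \<Rightarrow> bit mat \<Rightarrow> nat \<Rightarrow> nat \<Rightarrow> nat" where
  "kv p A B w v = (GREATEST k. equidist p A B w v k)"

definition primitive_poly :: "nat \<Rightarrow> bit poly \<Rightarrow> bool" where
  "primitive_poly p P = (degree P = p \<and> p \<ge> 1 \<and> monic P \<and> irreducible P \<and>
     P dvd (monom 1 (2 ^ p - 1) - 1) \<and>
     (\<forall>e. 0 < e \<and> e < 2 ^ p - 1 \<longrightarrow> \<not> P dvd (monom 1 e - 1)))"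

text \<open>h_{l-1} = P * G_{l-1}, where G_{l-1}(z) = sum_{i>=0} y_{i,l-1} z^{-i-1}. Its coefficient
  of z^n (n >= 0) is sum_{m=n+1}^{p} [z^m]P * y_{m-n-1,l-1}; this is the polynomial part of
  the product (the negative-power part vanishes by Cayley-Hamilton).\<close>
definition hpoly :: "nat \<Rightarrow> bit mat \<Rightarrow> bit mat \<Rightarrow> bit vec \<Rightarrow> nat \<Rightarrow> bit poly" where
  "hpoly p A B x0 l = Poly (map (\<lambda>n. \<Sum>m=n+1..p. coeff (char_poly A) m * outp A B x0 (m - n - 1) l)
                           [0..<p])"

end

theory Submission
  imports Defs
begin


declare add_bit_eq_xor[simp del] mult_bit_eq_and[simp del]

lemma bit_UNIV: "(UNIV :: bit set) = {0,1}"
proof -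
  { fix x :: bit have "x \<in> {0,1}" by (cases x) auto }
  then show ?thesis by blast
qed

lemma bit_add_self[simp]: "(x::bit) + x = 0" by (cases x) simp_all

lemma carrier_vec_image: "carrier_vec p = (\<lambda>f. vec p f) ` ({..<p} \<rightarrow>\<^sub>E (UNIV :: 'a set))"
proof (intro equalityI subsetI)
  fix x :: "'a vec" assume x: "x \<in> carrier_vec p"
  have "x = vec p (restrict (($) x) {..<p})" using x by (intro eq_vecI) auto
  moreover have "restrict (($) x) {..<p} \<in> {..<p} \<rightarrow>\<^sub>E UNIV" by simp
  ultimately show "x \<in> (\<lambda>f. vec p f) ` ({..<p} \<rightarrow>\<^sub>E UNIV)" by (rule image_eqI)
next
  fix x :: "'a vec" assume "x \<in> (\<lambda>f. vec p f) ` ({..<p} \<rightarrow>\<^sub>E UNIV)"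
  then obtain f where "x = vec p f" by blast
  then show "x \<in> carrier_vec p" by simp
qed

lemma inj_vec_PiE: "inj_on (vec p) ({..<p} \<rightarrow>\<^sub>E (UNIV :: 'a set))"
proof (rule inj_onI)
  fix f g :: "nat \<Rightarrow> 'a" assume f: "f \<in> {..<p} \<rightarrow>\<^sub>E UNIV" and g: "g \<in> {..<p} \<rightarrow>\<^sub>E UNIV"
    and e: "vec p f = vec p g"
  show "f = g"
  proof
    fix i show "f i = g i"
    proof (cases "i < p")
      case True then show ?thesis using arg_cong[OF e, of "\<lambda>v. v $ i"] by simp
    next
      case False then show ?thesis using f g by (auto simp: PiE_def extensional_def)
    qed
  qed
qed

lemma card_carrier_vec_bit: "card (carrier_vec p :: bit vec set) = 2 ^ p"
  and finite_carrier_vec_bit: "finite (carrier_vec p :: bit vec set)"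
proof -
  have c2: "card (UNIV :: bit set) = 2" by (simp add: bit_UNIV)
  show "card (carrier_vec p :: bit vec set) = 2 ^ p"
    unfolding carrier_vec_image card_image[OF inj_vec_PiE]
    by (simp add: card_funcsetE c2)
  show "finite (carrier_vec p :: bit vec set)"
    unfolding carrier_vec_image
    by (intro finite_imageI finite_PiE) (auto simp: bit_UNIV)
qed

definition fib :: "nat \<Rightarrow> ('i \<Rightarrow> bit vec) \<Rightarrow> 'i set \<Rightarrow> ('i \<Rightarrow> bit) \<Rightarrow> bit vec set" where
  "fib p r I t = {x \<in> carrier_vec p. \<forall>i\<in>I. r i \<bullet> x = t i}"

definition indep :: "nat \<Rightarrow> ('i \<Rightarrow> bit vec) \<Rightarrow> 'i set \<Rightarrow> bool" where
  "indep p r I = (\<forall>c. (\<forall>x\<in>carrier_vec p. (\<Sum>i\<in>I. c i * (r i \<bullet> x)) = 0) \<longrightarrow> (\<forall>i\<in>I. c i = 0))"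

lemma indep_subset:
  assumes "indep p r I" "J \<subseteq> I" "finite I"
  shows "indep p r J"
  unfolding indep_def
proof (intro allI impI)
  fix c assume h: "\<forall>x\<in>(carrier_vec p :: bit vec set). (\<Sum>i\<in>J. c i * (r i \<bullet> x)) = 0"
  define c' where "c' i = (if i \<in> J then c i else 0)" for i
  have "\<forall>x\<in>(carrier_vec p :: bit vec set). (\<Sum>i\<in>I. c' i * (r i \<bullet> x)) = 0"
  proof
    fix x :: "bit vec" assume x: "x \<in> carrier_vec p"
    have "(\<Sum>i\<in>I. c' i * (r i \<bullet> x)) = (\<Sum>i\<in>J. c' i * (r i \<bullet> x))"
      using assms(2,3) by (intro sum.mono_neutral_right) (auto simp: c'_def)
    also have "\<dots> = (\<Sum>i\<in>J. c i * (r i \<bullet> x))" by (simp add: c'_def)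
    finally show "(\<Sum>i\<in>I. c' i * (r i \<bullet> x)) = 0" using h x by simp
  qed
  then have "\<forall>i\<in>I. c' i = 0" using assms(1) unfolding indep_def by blast
  then show "\<forall>i\<in>J. c i = 0"
  proof (intro ballI)
    fix i assume i: "i \<in> J"
    then have "c' i = 0" using \<open>\<forall>i\<in>I. c' i = 0\<close> assms(2) by blast
    then show "c i = 0" using i by (simp add: c'_def)
  qed
qed

lemma fib_nonempty_indep:
  assumes "\<And>t. fib p r I t \<noteq> {}" "finite I"
  shows "indep p r I"
  unfolding indep_def
proof (intro allI impI ballI)
  fix c a assume h: "\<forall>x\<in>(carrier_vec p :: bit vec set). (\<Sum>i\<in>I. c i * (r i \<bullet> x)) = 0" and a: "a \<in> I"
  define t where "t i = (if i = a then (1::bit) else 0)" for i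
  obtain x where x: "x \<in> fib p r I t" using assms(1) by blast
  have "(\<Sum>i\<in>I. c i * (r i \<bullet> x)) = (\<Sum>i\<in>I. c i * t i)"
    using x by (intro sum.cong) (auto simp: fib_def)
  also have "\<dots> = (\<Sum>i\<in>I. if i = a then c i else 0)" by (intro sum.cong) (auto simp: t_def)
  also have "\<dots> = c a" using a assms(2) by (simp add: sum.delta)
  moreover have "x \<in> carrier_vec p" using x unfolding fib_def by blast
  ultimately show "c a = 0" using h by metis
qed

lemma bit_add_eq0: "(a::bit) + b = 0 \<Longrightarrow> a = b" by (cases a; cases b) (simp_all add: add_bit_eq_xor)

lemma scalar_prod_lincomb:
  assumes v: "v \<in> carrier_vec p" and e: "\<forall>i\<in>I. e i \<in> carrier_vec p"
  shows "v \<bullet> vec p (\<lambda>q. \<Sum>i\<in>I. (a i :: bit) * (e i $ q)) = (\<Sum>i\<in>I. a i * (v \<bullet> e i))"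
proof -
  have "v \<bullet> vec p (\<lambda>q. \<Sum>i\<in>I. a i * (e i $ q)) = (\<Sum>q\<in>{0..<p}. v $ q * (\<Sum>i\<in>I. a i * (e i $ q)))"
    unfolding scalar_prod_def by simp
  also have "\<dots> = (\<Sum>q\<in>{0..<p}. \<Sum>i\<in>I. a i * (v $ q * e i $ q))"
    by (intro sum.cong refl) (simp only: sum_distrib_left mult.left_commute)
  also have "\<dots> = (\<Sum>i\<in>I. \<Sum>q\<in>{0..<p}. a i * (v $ q * e i $ q))" by (rule sum.swap)
  also have "\<dots> = (\<Sum>i\<in>I. a i * (v \<bullet> e i))"
  proof (rule sum.cong[OF refl])
    fix i assume "i \<in> I"
    then have "dim_vec (e i) = p" using e by auto
    then show "(\<Sum>q\<in>{0..<p}. a i * (v $ q * e i $ q)) = a i * (v \<bullet> e i)"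
      unfolding scalar_prod_def by (simp only: sum_distrib_left)
  qed
  finally show ?thesis .
qed

lemma exists_sep:
  assumes fin: "finite I" and aI: "a \<notin> I" and rc: "\<forall>i\<in>insert a I. r i \<in> carrier_vec p"
    and ind: "indep p r (insert a I)" and ne: "\<And>t. fib p r I t \<noteq> {}"
  shows "\<exists>k\<in>carrier_vec p. (\<forall>i\<in>I. r i \<bullet> k = 0) \<and> r a \<bullet> k = 1"
proof (rule ccontr)
  assume "\<not> ?thesis"
  then have H: "\<And>k. k \<in> carrier_vec p \<Longrightarrow> (\<forall>i\<in>I. r i \<bullet> k = 0) \<Longrightarrow> r a \<bullet> k = 0" by auto
  define e where "e i = (SOME x. x \<in> fib p r I (\<lambda>j. if j = i then 1 else 0))" for i
  have e: "e i \<in> fib p r I (\<lambda>j. if j = i then 1 else 0)" for i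
    unfolding e_def using ne[of "\<lambda>j. if j = i then 1 else 0"] by (metis some_in_eq)
  have ec: "\<forall>i\<in>I. e i \<in> carrier_vec p" using e unfolding fib_def by blast
  have ej: "r j \<bullet> e i = (if i = j then 1 else 0)" if "j \<in> I" for i j
    using e[of i] that unfolding fib_def by auto
  define c where "c i = (if i = a then 1 else r a \<bullet> e i)" for i
  have "\<forall>x\<in>(carrier_vec p :: bit vec set). (\<Sum>i\<in>insert a I. c i * (r i \<bullet> x)) = 0"
  proof
    fix x :: "bit vec" assume x: "x \<in> carrier_vec p"
    define y where "y = vec p (\<lambda>q. \<Sum>i\<in>I. (r i \<bullet> x) * (e i $ q))"
    have yc: "y \<in> carrier_vec p" unfolding y_def by simp
    have ry: "v \<bullet> y = (\<Sum>i\<in>I. (r i \<bullet> x) * (v \<bullet> e i))" if "v \<in> carrier_vec p" for v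
      unfolding y_def by (rule scalar_prod_lincomb[OF that ec])
    have rjy: "r j \<bullet> y = r j \<bullet> x" if j: "j \<in> I" for j
    proof -
      have "r j \<bullet> y = (\<Sum>i\<in>I. (r i \<bullet> x) * (r j \<bullet> e i))" using ry rc j by auto
      also have "\<dots> = (\<Sum>i\<in>I. if i = j then r i \<bullet> x else 0)"
        by (rule sum.cong[OF refl]) (simp add: ej[OF j])
      also have "\<dots> = r j \<bullet> x" using j fin by simp
      finally show ?thesis .
    qed
    have "r a \<bullet> (x + y) = 0"
    proof (rule H)
      show "x + y \<in> carrier_vec p" using x yc by simp
      show "\<forall>i\<in>I. r i \<bullet> (x + y) = 0"
      proof
        fix i assume i: "i \<in> I"
        have "r i \<bullet> (x + y) = r i \<bullet> x + r i \<bullet> y"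
          using rc i x yc by (intro scalar_prod_add_distrib[of _ p]) auto
        then show "r i \<bullet> (x + y) = 0" using rjy[OF i] by simp
      qed
    qed
    moreover have "r a \<bullet> (x + y) = r a \<bullet> x + r a \<bullet> y"
      using rc x yc by (intro scalar_prod_add_distrib[of _ p]) auto
    ultimately have rax: "r a \<bullet> x = r a \<bullet> y" using bit_add_eq0 by metis
    have "(\<Sum>i\<in>insert a I. c i * (r i \<bullet> x)) = c a * (r a \<bullet> x) + (\<Sum>i\<in>I. c i * (r i \<bullet> x))"
      using fin aI by simp
    also have "(\<Sum>i\<in>I. c i * (r i \<bullet> x)) = (\<Sum>i\<in>I. (r i \<bullet> x) * (r a \<bullet> e i))"
      by (rule sum.cong[OF refl]) (use aI in \<open>auto simp: c_def\<close>)
    also have "\<dots> = r a \<bullet> y" using ry rc by auto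
    finally show "(\<Sum>i\<in>insert a I. c i * (r i \<bullet> x)) = 0" using rax by (simp add: c_def)
  qed
  then have "c a = 0" using ind unfolding indep_def by blast
  then show False by (simp add: c_def)
qed

lemma vec_add_add_cancel:
  assumes "(x :: bit vec) \<in> carrier_vec p" "k \<in> carrier_vec p"
  shows "x + k + k = x"
  using assms by (intro eq_vecI) (auto simp: add.assoc)

lemma count_fib:
  assumes "finite I" "\<forall>i\<in>I. r i \<in> carrier_vec p" "indep p r I"
  shows "card (fib p r I t) * 2 ^ card I = 2 ^ p"
  using assms
proof (induction I arbitrary: t rule: finite_induct)
  case empty
  have "fib p r {} t = carrier_vec p" by (simp add: fib_def)
  then have "card (fib p r {} t) = 2 ^ p" using card_carrier_vec_bit by metis
  then show ?case by (simp only: card.empty power_0 mult_1_right)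
next
  case (insert a I t)
  have fI: "finite (insert a I)" using insert.hyps(1) by blast
  have indI: "indep p r I" by (rule indep_subset[OF insert.prems(2) subset_insertI fI])
  have rcI: "\<forall>i\<in>I. r i \<in> carrier_vec p" using insert.prems(1) by blast
  have IH: "card (fib p r I t') * 2 ^ card I = 2 ^ p" for t' by (rule insert.IH[OF rcI indI])
  have ne: "fib p r I t' \<noteq> {}" for t'
  proof
    assume "fib p r I t' = {}"
    then show False using IH[of t'] by simp
  qed
  obtain k where kc: "k \<in> carrier_vec p" and k0: "\<forall>i\<in>I. r i \<bullet> k = 0" and k1: "r a \<bullet> k = 1"
    using exists_sep[OF insert.hyps(1,2) insert.prems(1,2) ne] by blast
  define S where "S = fib p r I t"
  define S0 where "S0 = {x\<in>S. r a \<bullet> x = t a}"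
  define S1 where "S1 = {x\<in>S. r a \<bullet> x = t a + 1}"
  have finS: "finite S" unfolding S_def fib_def using finite_carrier_vec_bit[of p] by auto
  have Sc: "S \<subseteq> carrier_vec p" unfolding S_def fib_def by auto
  have ra: "\<And>x. x \<in> carrier_vec p \<Longrightarrow> r a \<bullet> (x + k) = r a \<bullet> x + 1"
    using insert.prems(1) kc k1 by (subst scalar_prod_add_distrib[of _ p]) auto
  have ri: "\<And>x i. x \<in> carrier_vec p \<Longrightarrow> i \<in> I \<Longrightarrow> r i \<bullet> (x + k) = r i \<bullet> x"
    using insert.prems(1) kc k0 by (subst scalar_prod_add_distrib[of _ p]) auto
  have Sk: "x + k \<in> S" if "x \<in> S" for x
    using that Sc kc ri unfolding S_def fib_def by auto
  have img: "(\<lambda>x. x + k) ` S0 = S1"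
  proof (intro equalityI subsetI)
    fix y assume "y \<in> (\<lambda>x. x + k) ` S0"
    then obtain x where x: "x \<in> S0" "y = x + k" by blast
    then show "y \<in> S1" using Sk Sc ra unfolding S0_def S1_def by auto
  next
    fix y assume y: "y \<in> S1"
    then have yc: "y \<in> carrier_vec p" using Sc unfolding S1_def by auto
    have "y + k \<in> S0" using y Sk ra[OF yc] unfolding S0_def S1_def by (auto simp: add.assoc)
    moreover have "y = y + k + k" using vec_add_add_cancel[OF yc kc] by simp
    ultimately show "y \<in> (\<lambda>x. x + k) ` S0" by (rule rev_image_eqI)
  qed
  have inj: "inj_on (\<lambda>x. x + k) S0"
  proof (rule inj_onI)
    fix x y assume "x \<in> S0" "y \<in> S0" "x + k = y + k"
    then have "x + k + k = y + k + k" by simp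
    moreover have "x \<in> carrier_vec p" "y \<in> carrier_vec p" using \<open>x \<in> S0\<close> \<open>y \<in> S0\<close> Sc
      unfolding S0_def by auto
    ultimately show "x = y" using vec_add_add_cancel[OF _ kc] by metis
  qed
  have c01: "card S1 = card S0" using card_image[OF inj] img by simp
  have b2: "(u::bit) = v \<or> u = v + 1" for u v by (cases u; cases v) (simp_all add: add_bit_eq_xor)
  have b3: "(v::bit) \<noteq> v + 1" for v by (cases v) (simp_all add: add_bit_eq_xor)
  have "S = S0 \<union> S1" unfolding S0_def S1_def using b2 by blast
  moreover have "S0 \<inter> S1 = {}" unfolding S0_def S1_def using b3 by force
  ultimately have "card S = card S0 + card S1" using finS
    by (metis card_Un_disjoint finite_Un)
  then have cS: "card S = 2 * card S0" using c01 by simp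
  have "fib p r (insert a I) t = S0" unfolding S0_def S_def fib_def by auto
  then show ?case using IH[of t] cS insert.hyps unfolding S_def by (simp add: ac_simps)
qed


lemma pow_mat_carrier': "A \<in> carrier_mat n n \<Longrightarrow> A ^\<^sub>m k \<in> carrier_mat n n"
  by (induct k) auto

lemma pow_mat_Suc_left:
  assumes A: "A \<in> carrier_mat n n"
  shows "A ^\<^sub>m Suc k = A * A ^\<^sub>m k"
proof (induct k)
  case 0 then show ?case using A by simp
next
  case (Suc k)
  have "A ^\<^sub>m Suc (Suc k) = A ^\<^sub>m Suc k * A" by simp
  also have "\<dots> = (A * A ^\<^sub>m k) * A" using Suc by simp
  also have "\<dots> = A * (A ^\<^sub>m k * A)"
    by (rule assoc_mult_mat[OF A pow_mat_carrier'[OF A] A])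
  also have "\<dots> = A * A ^\<^sub>m Suc k" by simp
  finally show ?case .
qed

lemma coeff_mult_cpm:
  fixes q :: "'a :: comm_ring_1 poly"
  assumes "m < n" "j < n" "A \<in> carrier_mat n n"
  shows "coeff (q * char_poly_matrix A $$ (m,j)) k =
     (if m = j then (if k = 0 then 0 else coeff q (k - 1)) else 0) - coeff q k * A $$ (m,j)"
proof -
  have C: "char_poly_matrix A $$ (m,j) = (if m = j then [:0,1:] else 0) + [:- A $$ (m,j):]"
    using assms unfolding char_poly_matrix_def by simp
  have "q * char_poly_matrix A $$ (m,j) = (if m = j then pCons 0 q else 0) + Polynomial.smult (- A $$ (m,j)) q"
    unfolding C by (simp add: algebra_simps)
  then show ?thesis by (cases k) (auto simp: coeff_pCons)
qed

lemma cayley_hamilton_entry: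
  fixes A :: "'a :: comm_ring_1 mat"
  assumes A: "A \<in> carrier_mat n n" and i: "i < n" and j: "j < n"
    and N: "degree (char_poly A) < N"
  shows "(\<Sum>k<N. coeff (char_poly A) k * (A ^\<^sub>m k) $$ (i,j)) = 0"
proof -
  define C where "C = char_poly_matrix A"
  define Adj where "Adj = adj_mat C"
  have Cc: "C \<in> carrier_mat n n" unfolding C_def using A by simp
  have Adjc: "Adj \<in> carrier_mat n n" unfolding Adj_def using adj_mat(1)[OF Cc] .
  have AC: "Adj * C = char_poly A \<cdot>\<^sub>m 1\<^sub>m n"
    unfolding Adj_def using adj_mat(3)[OF Cc] by (simp add: char_poly_def C_def)
  define c where "c k = coeff (char_poly A) k" for k
  define \<beta> where "\<beta> k m = coeff (Adj $$ (i,m)) k" for k m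
  define \<beta>' where "\<beta>' k m = (if k = 0 then 0 else \<beta> (k - 1) m)" for k m
  define P where "P k = A ^\<^sub>m k" for k
  have Pc: "P k \<in> carrier_mat n n" for k unfolding P_def by (rule pow_mat_carrier'[OF A])
  have E: "\<beta>' k m - (\<Sum>m'<n. \<beta> k m' * A $$ (m',m)) = (if i = m then c k else 0)"
    if m: "m < n" for k m
  proof -
    have "(Adj * C) $$ (i,m) = (\<Sum>m'<n. Adj $$ (i,m') * C $$ (m',m))"
      using Adjc Cc i m by (simp add: scalar_prod_def lessThan_atLeast0)
    then have "coeff ((Adj * C) $$ (i,m)) k = (\<Sum>m'<n. coeff (Adj $$ (i,m') * C $$ (m',m)) k)"
      by (simp add: coeff_sum)
    also have "\<dots> = (\<Sum>m'<n. (if m' = m then \<beta>' k m' else 0) - \<beta> k m' * A $$ (m',m))"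
      by (intro sum.cong refl, unfold C_def, subst coeff_mult_cpm[OF _ m A])
         (auto simp: \<beta>'_def \<beta>_def)
    also have "\<dots> = (\<Sum>m'<n. if m' = m then \<beta>' k m' else 0) - (\<Sum>m'<n. \<beta> k m' * A $$ (m',m))"
      by (simp add: sum_subtractf)
    also have "(\<Sum>m'<n. if m' = m then \<beta>' k m' else 0) = \<beta>' k m" using m by simp
    finally have 1: "coeff ((Adj * C) $$ (i,m)) k = \<beta>' k m - (\<Sum>m'<n. \<beta> k m' * A $$ (m',m))" .
    have "coeff ((Adj * C) $$ (i,m)) k = (if i = m then c k else 0)"
      unfolding AC using i m by (simp add: c_def)
    with 1 show ?thesis by simp
  qed
  define U where "U k = (\<Sum>m<n. \<beta>' k m * P k $$ (m,j))" for k
  have U0: "U 0 = 0" unfolding U_def \<beta>'_def by simp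
  have step: "c k * P k $$ (i,j) = U k - U (Suc k)" for k
  proof -
    have "(\<Sum>m<n. (if i = m then c k else 0) * P k $$ (m,j)) = (\<Sum>m<n. if i = m then c k * P k $$ (m,j) else 0)"
      by (rule sum.cong) auto
    also have "\<dots> = c k * P k $$ (i,j)" using i by simp
    finally have "c k * P k $$ (i,j) = (\<Sum>m<n. (if i = m then c k else 0) * P k $$ (m,j))" by simp
    also have "\<dots> = (\<Sum>m<n. (\<beta>' k m - (\<Sum>m'<n. \<beta> k m' * A $$ (m',m))) * P k $$ (m,j))"
      by (intro sum.cong refl) (simp add: E)
    also have "\<dots> = U k - (\<Sum>m<n. (\<Sum>m'<n. \<beta> k m' * A $$ (m',m)) * P k $$ (m,j))"
      unfolding U_def by (simp only: left_diff_distrib sum_subtractf)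
    also have "(\<Sum>m<n. (\<Sum>m'<n. \<beta> k m' * A $$ (m',m)) * P k $$ (m,j))
        = (\<Sum>m'<n. \<beta> k m' * (\<Sum>m<n. A $$ (m',m) * P k $$ (m,j)))"
      by (simp only: sum_distrib_left sum_distrib_right mult.assoc) (rule sum.swap)
    also have "\<dots> = (\<Sum>m'<n. \<beta> k m' * P (Suc k) $$ (m',j))"
    proof (intro sum.cong refl)
      fix m' assume m': "m' \<in> {..<n}"
      have "P (Suc k) $$ (m',j) = (A * P k) $$ (m',j)" unfolding P_def using pow_mat_Suc_left[OF A] by simp
      also have "\<dots> = (\<Sum>m<n. A $$ (m',m) * P k $$ (m,j))"
        using A Pc[of k] m' j by (simp add: scalar_prod_def lessThan_atLeast0)
      finally show "\<beta> k m' * (\<Sum>m<n. A $$ (m',m) * P k $$ (m,j)) = \<beta> k m' * P (Suc k) $$ (m',j)" by simp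
    qed
    also have "\<dots> = U (Suc k)" unfolding U_def \<beta>'_def by simp
    finally show ?thesis .
  qed
  define D where "D = (\<Sum>i'<n. \<Sum>m<n. degree (Adj $$ (i',m)))"
  have degD: "degree (Adj $$ (i,m)) \<le> D" if "m < n" for m
  proof -
    have "degree (Adj $$ (i,m)) \<le> (\<Sum>m<n. degree (Adj $$ (i,m)))"
      using that by (intro member_le_sum) auto
    also have "\<dots> \<le> D" unfolding D_def using i by (intro member_le_sum[of i]) auto
    finally show ?thesis .
  qed
  define N0 where "N0 = max N (D + 2)"
  have UN0: "U N0 = 0"
  proof -
    have "\<beta>' N0 m = 0" if "m < n" for m
      using degD[OF that] unfolding \<beta>'_def \<beta>_def N0_def by (auto intro: coeff_eq_0)
    then show ?thesis unfolding U_def by simp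
  qed
  have "(\<Sum>k<N0. c k * P k $$ (i,j)) = (\<Sum>k<N0. U k - U (Suc k))" using step by simp
  also have "\<dots> = U 0 - U N0" by (rule sum_lessThan_telescope')
  also have "\<dots> = 0" using U0 UN0 by simp
  finally have "(\<Sum>k<N0. c k * P k $$ (i,j)) = 0" .
  moreover have "(\<Sum>k<N0. c k * P k $$ (i,j)) = (\<Sum>k<N. c k * P k $$ (i,j))"
  proof -
    have cz: "c k = 0" if "N \<le> k" for k unfolding c_def using N that by (intro coeff_eq_0) simp
    show ?thesis unfolding N0_def by (intro sum.mono_neutral_right) (auto simp: cz)
  qed
  ultimately show ?thesis unfolding c_def P_def by simp
qed


declare add_bit_eq_xor[simp del] mult_bit_eq_and[simp del]

locale cyc =
  fixes p :: nat and A :: "bit mat" and f :: "bit vec"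
  assumes A: "A \<in> carrier_mat p p" and f: "f \<in> carrier_vec p"
begin

definition s :: "nat \<Rightarrow> bit vec \<Rightarrow> bit" where "s k x = f \<bullet> (A ^\<^sub>m k *\<^sub>v x)"

definition G :: "bit poly \<Rightarrow> bit vec \<Rightarrow> bit" where
  "G g x = (\<Sum>k<Suc (degree g). coeff g k * s k x)"

lemma G_ext: "degree g < N \<Longrightarrow> G g x = (\<Sum>k<N. coeff g k * s k x)"
  unfolding G_def by (intro sum.mono_neutral_left) (auto simp: coeff_eq_0)

lemma G_add: "G (g + h) x = G g x + G h x"
proof -
  define N where "N = Suc (max (degree g) (degree h))"
  have "degree (g + h) < N" unfolding N_def using degree_add_le_max[of g h] by simp
  then have "G (g + h) x = (\<Sum>k<N. coeff (g + h) k * s k x)" by (rule G_ext)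
  also have "\<dots> = (\<Sum>k<N. coeff g k * s k x) + (\<Sum>k<N. coeff h k * s k x)"
    by (simp add: distrib_right sum.distrib)
  also have "\<dots> = G g x + G h x"
    using G_ext[of g N x] G_ext[of h N x] unfolding N_def by simp
  finally show ?thesis .
qed

lemma G_smult: "G (Polynomial.smult c g) x = c * G g x"
proof -
  have "G (Polynomial.smult c g) x = (\<Sum>k<Suc (degree g). coeff (Polynomial.smult c g) k * s k x)"
    by (rule G_ext) (use degree_smult_le[of c g] in simp)
  also have "\<dots> = c * G g x" unfolding G_def by (simp only: coeff_smult sum_distrib_left mult.assoc)
  finally show ?thesis .
qed

lemma s_Suc: "x \<in> carrier_vec p \<Longrightarrow> s (Suc k) x = s k (A *\<^sub>v x)"
  unfolding s_def using A by (simp add: assoc_mult_mat_vec[OF pow_mat_carrier'[OF A] A])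

lemma G_pCons0: "x \<in> carrier_vec p \<Longrightarrow> G (pCons 0 g) x = G g (A *\<^sub>v x)"
proof -
  assume x: "x \<in> carrier_vec p"
  have "G (pCons 0 g) x = (\<Sum>k<Suc (Suc (degree g)). coeff (pCons 0 g) k * s k x)"
    by (rule G_ext) (cases "g = 0", auto)
  also have "\<dots> = (\<Sum>k<Suc (degree g). coeff g k * s (Suc k) x)"
    by (subst sum.lessThan_Suc_shift) simp
  also have "\<dots> = G g (A *\<^sub>v x)" unfolding G_def using s_Suc[OF x] by simp
  finally show ?thesis .
qed

definition Ann :: "bit poly set" where "Ann = {g. \<forall>x\<in>carrier_vec p. G g x = 0}"

lemma Ann_add: "g \<in> Ann \<Longrightarrow> h \<in> Ann \<Longrightarrow> g + h \<in> Ann"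
  unfolding Ann_def by (simp add: G_add)

lemma Ann_mult: "g \<in> Ann \<Longrightarrow> a * g \<in> Ann"
proof (induction a rule: pCons_induct)
  case 0 then show ?case unfolding Ann_def G_def by simp
next
  case (pCons c a)
  have "pCons c a * g = Polynomial.smult c g + pCons 0 (a * g)" by (rule mult_pCons_left)
  moreover have "Polynomial.smult c g \<in> Ann" using pCons.prems unfolding Ann_def by (simp add: G_smult)
  moreover have "pCons 0 (a * g) \<in> Ann"
    using pCons.IH[OF pCons.prems] A unfolding Ann_def by (simp add: G_pCons0)
  ultimately show ?case using Ann_add by simp
qed

lemma scalar_mult_expand:
  assumes M: "M \<in> carrier_mat p p" and x: "x \<in> carrier_vec p"
  shows "f \<bullet> (M *\<^sub>v x) = (\<Sum>i<p. \<Sum>j<p. f $ i * (M $$ (i,j) * x $ j))"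
  using M x f by (simp add: scalar_prod_def lessThan_atLeast0 sum_distrib_left)

lemma char_poly_Ann:
  assumes deg: "degree (char_poly A) = p"
  shows "char_poly A \<in> Ann"
  unfolding Ann_def
proof (intro CollectI ballI)
  fix x :: "bit vec" assume x: "x \<in> carrier_vec p"
  define c where "c k = coeff (char_poly A) k" for k
  define M where "M k = A ^\<^sub>m k" for k
  have Mc: "M k \<in> carrier_mat p p" for k unfolding M_def by (rule pow_mat_carrier'[OF A])
  have "G (char_poly A) x = (\<Sum>k<Suc p. c k * (\<Sum>i<p. \<Sum>j<p. f $ i * (M k $$ (i,j) * x $ j)))"
    unfolding G_def deg c_def s_def M_def[symmetric] using scalar_mult_expand[OF Mc x] by simp
  also have "\<dots> = (\<Sum>k<Suc p. \<Sum>i<p. \<Sum>j<p. c k * (f $ i * (M k $$ (i,j) * x $ j)))"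
    by (simp only: sum_distrib_left)
  also have "\<dots> = (\<Sum>i<p. \<Sum>k<Suc p. \<Sum>j<p. c k * (f $ i * (M k $$ (i,j) * x $ j)))"
    by (rule sum.swap)
  also have "\<dots> = (\<Sum>i<p. \<Sum>j<p. \<Sum>k<Suc p. c k * (f $ i * (M k $$ (i,j) * x $ j)))"
    by (rule sum.cong[OF refl]) (rule sum.swap)
  also have "\<dots> = (\<Sum>i<p. \<Sum>j<p. (f $ i * x $ j) * (\<Sum>k<Suc p. c k * M k $$ (i,j)))"
    by (intro sum.cong[OF refl]) (simp only: sum_distrib_left ac_simps)
  also have "\<dots> = 0"
  proof (intro sum.neutral ballI)
    fix i j assume "i \<in> {..<p}" "j \<in> {..<p}"
    then have "(\<Sum>k<Suc p. c k * M k $$ (i,j)) = 0"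
      unfolding c_def M_def using cayley_hamilton_entry[OF A, of i j "Suc p"] deg by simp
    then show "f $ i * x $ j * (\<Sum>k<Suc p. c k * M k $$ (i,j)) = 0" by simp
  qed
  finally show "G (char_poly A) x = 0" .
qed

lemma one_Ann_imp: "1 \<in> Ann \<Longrightarrow> f = 0\<^sub>v p"
proof -
  assume "1 \<in> Ann"
  then have h: "f \<bullet> x = 0" if "x \<in> carrier_vec p" for x
    using that A unfolding Ann_def G_def s_def by simp
  show "f = 0\<^sub>v p"
  proof (rule eq_vecI)
    fix q assume "q < dim_vec (0\<^sub>v p :: bit vec)"
    then have q: "q < p" by simp
    have "f $ q = f \<bullet> unit_vec p q" using q by (simp add: scalar_prod_right_unit)
    also have "\<dots> = 0" using h[of "unit_vec p q"] by simp
    finally show "f $ q = 0\<^sub>v p $ q" using q by simp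
  qed (use f in simp)
qed

lemma small_not_Ann:
  assumes deg: "degree (char_poly A) = p" and irr: "irreducible (char_poly A)"
    and g: "g \<noteq> 0" "degree g < p" "g \<in> Ann"
  shows "f = 0\<^sub>v p"
proof -
  let ?P = "char_poly A"
  have PA: "?P \<in> Ann" using char_poly_Ann[OF deg] .
  define d where "d = (LEAST d. \<exists>h\<in>Ann. h \<noteq> 0 \<and> degree h = d)"
  have ex: "\<exists>h\<in>Ann. h \<noteq> 0 \<and> degree h = degree g" using g by blast
  have "\<exists>h\<in>Ann. h \<noteq> 0 \<and> degree h = d" unfolding d_def by (rule LeastI_ex) (use ex in blast)
  then obtain h where h: "h \<in> Ann" "h \<noteq> 0" "degree h = d" by blast
  have dmin: "d \<le> degree h'" if "h' \<in> Ann" "h' \<noteq> 0" for h'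
    unfolding d_def by (rule Least_le) (use that in blast)
  have hg: "degree h \<le> degree g" using dmin[OF g(3,1)] h(3) by simp
  have "?P mod h = ?P + (- (?P div h)) * h" using div_mult_mod_eq[of ?P h] by (simp add: algebra_simps)
  then have "?P mod h \<in> Ann" using Ann_add[OF PA Ann_mult[OF h(1), of "- (?P div h)"]] by metis
  moreover have "?P mod h = 0 \<or> degree (?P mod h) < degree h" using degree_mod_less[OF h(2)] .
  ultimately have "?P mod h = 0" using dmin h(3) by fastforce
  then have "h dvd ?P" by (simp add: mod_eq_0_iff_dvd)
  then have "?P dvd h \<or> h dvd 1" by (rule irreducibleD'[OF irr])
  then show ?thesis
  proof
    assume "?P dvd h"
    then have "degree ?P \<le> degree h" using h(2) by (rule dvd_imp_degree_le)
    then show ?thesis using deg g(2) hg by simp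
  next
    assume "h dvd 1"
    then obtain k where "1 = h * k" by (rule dvdE)
    then have "1 = k * h" by (simp add: mult.commute)
    then have "1 \<in> Ann" using Ann_mult[OF h(1), of k] by simp
    then show ?thesis by (rule one_Ann_imp)
  qed
qed

lemma cyclic:
  assumes deg: "degree (char_poly A) = p" and irr: "irreducible (char_poly A)"
    and x0: "x0 \<in> carrier_vec p" "x0 \<noteq> 0\<^sub>v p"
    and orth: "\<forall>i. f \<bullet> (A ^\<^sub>m i *\<^sub>v x0) = 0"
  shows "f = 0\<^sub>v p"
proof (rule ccontr)
  assume fnz: "f \<noteq> 0\<^sub>v p"
  define r where "r k = transpose_mat (A ^\<^sub>m k) *\<^sub>v f" for k
  have Pc: "A ^\<^sub>m k \<in> carrier_mat p p" for k by (rule pow_mat_carrier'[OF A])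
  have rc: "r k \<in> carrier_vec p" for k unfolding r_def by (rule mult_mat_vec_carrier[OF transpose_carrier_mat[THEN iffD2, OF Pc] f])
  have rs: "r k \<bullet> x = s k x" if "x \<in> carrier_vec p" for k x
    unfolding r_def s_def by (rule transpose_vec_mult_scalar[OF Pc that f])
  have ind: "indep p r {..<p}"
    unfolding indep_def
  proof (intro allI impI)
    fix c assume H: "\<forall>x\<in>(carrier_vec p :: bit vec set). (\<Sum>i\<in>{..<p}. c i * (r i \<bullet> x)) = 0"
    define g where "g = (\<Sum>k<p. monom (c k) k)"
    have cg: "coeff g k = (if k < p then c k else 0)" for k
    proof -
      have "coeff g k = (\<Sum>i<p. if i = k then c i else 0)" unfolding g_def
        by (simp add: coeff_sum coeff_monom)
      also have "\<dots> = (if k < p then c k else 0)" by simp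
      finally show ?thesis .
    qed
    show "\<forall>i\<in>{..<p}. c i = 0"
    proof (cases "g = 0")
      case True then show ?thesis using cg by (metis coeff_0 lessThan_iff)
    next
      case False
      have dg: "degree g < p"
      proof (rule ccontr)
        assume "\<not> degree g < p"
        then have "coeff g (degree g) = 0" using cg by simp
        then show False using False by simp
      qed
      have "g \<in> Ann" unfolding Ann_def
      proof (intro CollectI ballI)
        fix x :: "bit vec" assume x: "x \<in> carrier_vec p"
        have "G g x = (\<Sum>k<p. coeff g k * s k x)" by (rule G_ext[OF dg])
        also have "\<dots> = (\<Sum>k<p. c k * (r k \<bullet> x))" by (intro sum.cong refl) (simp add: cg rs[OF x])
        also have "\<dots> = 0" using H x by simp
        finally show "G g x = 0" .
      qed
      then have "f = 0\<^sub>v p" using small_not_Ann[OF deg irr False dg] by simp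
      then show ?thesis using fnz by simp
    qed
  qed
  have "card (fib p r {..<p} (\<lambda>_. 0)) * 2 ^ card {..<p} = 2 ^ p"
    by (rule count_fib) (use rc ind in auto)
  then have c1: "card (fib p r {..<p} (\<lambda>_. 0)) = 1" by simp
  have "x0 \<in> fib p r {..<p} (\<lambda>_. 0)" unfolding fib_def using x0(1) orth rs s_def by simp
  moreover have "0\<^sub>v p \<in> fib p r {..<p} (\<lambda>_. 0)" unfolding fib_def
    using rc by (simp add: scalar_prod_right_zero)
  ultimately have "x0 = 0\<^sub>v p" using c1 by (metis card_1_singletonE singletonD)
  then show False using x0(2) by simp
qed

end


definition enc :: "nat \<Rightarrow> (nat \<Rightarrow> bool) \<Rightarrow> nat" where
  "enc v \<beta> = (\<Sum>m<v. of_bool (\<beta> m) * 2 ^ m)"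

lemma enc_Suc: "enc (Suc v) \<beta> = of_bool (\<beta> 0) + 2 * enc v (\<lambda>m. \<beta> (Suc m))"
  unfolding enc_def by (simp only: sum.lessThan_Suc_shift power_0 mult_1_right power_Suc sum_distrib_left mult.left_commute)

lemma enc_lt: "enc v \<beta> < 2 ^ v"
proof (induction v arbitrary: \<beta>)
  case 0 then show ?case by (simp add: enc_def)
next
  case (Suc v)
  have "enc v (\<lambda>m. \<beta> (Suc m)) < 2 ^ v" by (rule Suc.IH)
  then show ?case unfolding enc_Suc by simp
qed

lemma enc_inj: "enc v \<beta> = enc v \<gamma> \<Longrightarrow> m < v \<Longrightarrow> \<beta> m = \<gamma> m"
proof (induction v arbitrary: \<beta> \<gamma> m)
  case 0 then show ?case by simp
next
  case (Suc v)
  have e: "of_bool (\<beta> 0) + 2 * enc v (\<lambda>m. \<beta> (Suc m)) = (of_bool (\<gamma> 0) + 2 * enc v (\<lambda>m. \<gamma> (Suc m)) :: nat)"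
    using Suc.prems(1) unfolding enc_Suc .
  have "(of_bool (\<beta> 0) + 2 * enc v (\<lambda>m. \<beta> (Suc m))) mod 2 = (of_bool (\<gamma> 0) + 2 * enc v (\<lambda>m. \<gamma> (Suc m)) :: nat) mod 2"
    using e by simp
  then have b0: "\<beta> 0 = \<gamma> 0" by (cases "\<beta> 0"; cases "\<gamma> 0") simp_all
  with e have "enc v (\<lambda>m. \<beta> (Suc m)) = enc v (\<lambda>m. \<gamma> (Suc m))" by simp
  then show ?case
  proof (cases m)
    case 0 then show ?thesis using b0 by simp
  next
    case (Suc m')
    then show ?thesis using Suc.IH[OF \<open>enc v _ = enc v _\<close>, of m'] \<open>m < Suc v\<close> by simp
  qed
qed

lemma enc_surj: "n < 2 ^ v \<Longrightarrow> \<exists>\<beta>. enc v \<beta> = n"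
proof (induction v arbitrary: n)
  case 0 then show ?case by (simp add: enc_def)
next
  case (Suc v)
  have "n div 2 < 2 ^ v" using Suc.prems by simp
  then obtain \<beta> where b: "enc v \<beta> = n div 2" using Suc.IH by blast
  define \<gamma> where "\<gamma> m = (if m = 0 then odd n else \<beta> (m - 1))" for m
  have "enc (Suc v) \<gamma> = of_bool (odd n) + 2 * (n div 2)" unfolding enc_Suc b[symmetric] \<gamma>_def by simp
  also have "\<dots> = n" by (cases "odd n") (simp_all add: odd_two_times_div_two_succ)
  finally show ?case by blast
qed


lemma tail_sum:
  assumes "v \<le> w"
  shows "(\<Sum>l\<in>{Suc v..w}. (2::real) powr (real v - real l)) = 1 - 2 powr (real v - real w)"
  using assms
proof (induction w)
  case 0 then show ?case by simp
next
  case (Suc w)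
  show ?case
  proof (cases "v = Suc w")
    case True then show ?thesis by simp
  next
    case False
    then have vw: "v \<le> w" using Suc.prems by simp
    have "{Suc v..Suc w} = insert (Suc w) {Suc v..w}" using vw by auto
    then have "(\<Sum>l\<in>{Suc v..Suc w}. (2::real) powr (real v - real l))
        = 2 powr (real v - real (Suc w)) + (\<Sum>l\<in>{Suc v..w}. (2::real) powr (real v - real l))"
      by simp
    also have "\<dots> = 2 powr (real v - real (Suc w)) + (1 - 2 powr (real v - real w))"
      using Suc.IH[OF vw] by simp
    also have "2 powr (real v - real w) = 2 * 2 powr (real v - real (Suc w))"
      by (simp add: powr_diff powr_add)
    finally show ?thesis by simp
  qed
qed

lemma cell_enc:
  assumes vw: "v \<le> w"
  shows "cell v (uval A B w x j) = int (enc v (\<lambda>m. outp A B x j (v - 1 - m) = 1))"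
proof -
  define b where "b l = bit_val (outp A B x j l)" for l
  have b01: "0 \<le> b l \<and> b l \<le> 1" for l unfolding b_def bit_val_def by simp
  have u: "uval A B w x j * 2 ^ v = (\<Sum>l\<in>{1..w}. b (l - 1) * (2 powr (- real l) * 2 ^ v))"
    unfolding uval_def b_def by (simp add: sum_distrib_right mult.assoc)
  have split: "{1..w} = {1..v} \<union> {Suc v..w}" using vw by auto
  have "(\<Sum>l\<in>{1..w}. b (l - 1) * (2 powr (- real l) * 2 ^ v))
      = (\<Sum>l\<in>{1..v}. b (l - 1) * (2 powr (- real l) * 2 ^ v))
      + (\<Sum>l\<in>{Suc v..w}. b (l - 1) * (2 powr (- real l) * 2 ^ v))"
    unfolding split by (rule sum.union_disjoint) auto
  moreover have p1: "(\<Sum>l\<in>{1..v}. b (l - 1) * (2 powr (- real l) * 2 ^ v))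
      = real (enc v (\<lambda>m. outp A B x j (v - 1 - m) = 1))"
  proof -
    have "(\<Sum>l\<in>{1..v}. b (l - 1) * (2 powr (- real l) * 2 ^ v))
        = (\<Sum>l\<in>{1..v}. b (l - 1) * 2 ^ (v - l))"
    proof (rule sum.cong[OF refl])
      fix l assume l: "l \<in> {1..v}"
      have "(2::real) powr (- real l) * 2 ^ v = 2 powr (- real l) * 2 powr (real v)"
        by (simp add: powr_realpow)
      also have "\<dots> = 2 powr (real (v - l))" using l by (simp add: powr_add[symmetric] of_nat_diff)
      also have "\<dots> = 2 ^ (v - l)" by (simp add: powr_realpow)
      finally show "b (l - 1) * (2 powr (- real l) * 2 ^ v) = b (l - 1) * 2 ^ (v - l)" by simp
    qed
    also have "\<dots> = (\<Sum>m<v. b (v - 1 - m) * 2 ^ m)"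
      by (rule sum.reindex_bij_witness[of _ "\<lambda>m. v - m" "\<lambda>l. v - l"]) auto
    also have "\<dots> = real (enc v (\<lambda>m. outp A B x j (v - 1 - m) = 1))"
      unfolding enc_def of_nat_sum by (intro sum.cong refl) (simp add: b_def bit_val_def)
    finally show ?thesis .
  qed
  moreover have p2: "0 \<le> (\<Sum>l\<in>{Suc v..w}. b (l - 1) * (2 powr (- real l) * 2 ^ v))
     \<and> (\<Sum>l\<in>{Suc v..w}. b (l - 1) * (2 powr (- real l) * 2 ^ v)) < 1"
  proof
    show "0 \<le> (\<Sum>l\<in>{Suc v..w}. b (l - 1) * (2 powr (- real l) * 2 ^ v))"
      using b01 by (intro sum_nonneg) auto
    have "(\<Sum>l\<in>{Suc v..w}. b (l - 1) * (2 powr (- real l) * 2 ^ v))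
        \<le> (\<Sum>l\<in>{Suc v..w}. (2::real) powr (real v - real l))"
    proof (rule sum_mono)
      fix l assume "l \<in> {Suc v..w}"
      have e: "(2::real) powr (- real l) * 2 ^ v = 2 powr (real v - real l)"
        by (simp add: powr_realpow[symmetric] powr_add[symmetric])
      show "b (l - 1) * (2 powr (- real l) * 2 ^ v) \<le> 2 powr (real v - real l)"
        unfolding e using b01[of "l - 1"] by (simp add: mult_left_le_one_le)
    qed
    also have "\<dots> = 1 - 2 powr (real v - real w)" by (rule tail_sum[OF vw])
    also have "\<dots> < 1" by simp
    finally show "(\<Sum>l\<in>{Suc v..w}. b (l - 1) * (2 powr (- real l) * 2 ^ v)) < 1" .
  qed
  ultimately show ?thesis unfolding cell_def u
    by (simp add: floor_eq_iff)
qed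


declare add_bit_eq_xor[simp del] mult_bit_eq_and[simp del]

definition rr :: "bit mat \<Rightarrow> bit mat \<Rightarrow> nat \<times> nat \<Rightarrow> bit vec" where
  "rr A B jl = row (B * A ^\<^sub>m fst jl) (snd jl)"

lemma pow_mat_carrier'': "A \<in> carrier_mat n n \<Longrightarrow> A ^\<^sub>m k \<in> carrier_mat n n"
  by (induct k) auto

lemma rr_carrier:
  assumes "A \<in> carrier_mat p p" "B \<in> carrier_mat w p"
  shows "rr A B jl \<in> carrier_vec p"
  unfolding rr_def using assms pow_mat_carrier''[OF assms(1)] by (simp add: carrier_vecI)

lemma outp_rr:
  assumes A: "A \<in> carrier_mat p p" and B: "B \<in> carrier_mat w p" and x: "x \<in> carrier_vec p" and l: "l < w"
  shows "outp A B x j l = rr A B (j,l) \<bullet> x"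
proof -
  have P: "A ^\<^sub>m j \<in> carrier_mat p p" by (rule pow_mat_carrier''[OF A])
  have "outp A B x j l = (B *\<^sub>v (A ^\<^sub>m j *\<^sub>v x)) $ l" unfolding outp_def state_def by simp
  also have "B *\<^sub>v (A ^\<^sub>m j *\<^sub>v x) = (B * A ^\<^sub>m j) *\<^sub>v x"
    by (rule assoc_mult_mat_vec[OF B P x, symmetric])
  also have "((B * A ^\<^sub>m j) *\<^sub>v x) $ l = rr A B (j,l) \<bullet> x"
    unfolding rr_def using B P l by simp
  finally show ?thesis .
qed

lemma bit_eq_1_iff: "((z::bit) = 1) = b \<longleftrightarrow> z = (if b then 1 else 0)"
  by (cases z) auto

lemma cell_iff:
  assumes A: "A \<in> carrier_mat p p" and B: "B \<in> carrier_mat w p" and x: "x \<in> carrier_vec p"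
    and vw: "v \<le> w"
  shows "cell v (uval A B w x j) = int (enc v \<beta>) \<longleftrightarrow>
         (\<forall>l<v. rr A B (j,l) \<bullet> x = (if \<beta> (v - 1 - l) then 1 else 0))"
proof -
  define \<gamma> where "\<gamma> m = (outp A B x j (v - 1 - m) = 1)" for m
  have "cell v (uval A B w x j) = int (enc v \<beta>) \<longleftrightarrow> enc v \<gamma> = enc v \<beta>"
    unfolding cell_enc[OF vw] \<gamma>_def by simp
  also have "\<dots> \<longleftrightarrow> (\<forall>m<v. \<gamma> m = \<beta> m)"
  proof
    assume "enc v \<gamma> = enc v \<beta>" then show "\<forall>m<v. \<gamma> m = \<beta> m" using enc_inj by blast
  next
    assume "\<forall>m<v. \<gamma> m = \<beta> m" then show "enc v \<gamma> = enc v \<beta>" unfolding enc_def by simp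
  qed
  also have "\<dots> \<longleftrightarrow> (\<forall>l<v. \<gamma> (v - 1 - l) = \<beta> (v - 1 - l))"
  proof
    assume h: "\<forall>m<v. \<gamma> m = \<beta> m"
    show "\<forall>l<v. \<gamma> (v - 1 - l) = \<beta> (v - 1 - l)"
    proof (intro allI impI)
      fix l assume "l < v" then show "\<gamma> (v - 1 - l) = \<beta> (v - 1 - l)" using h by simp
    qed
  next
    assume h: "\<forall>l<v. \<gamma> (v - 1 - l) = \<beta> (v - 1 - l)"
    show "\<forall>m<v. \<gamma> m = \<beta> m"
    proof (intro allI impI)
      fix m assume m: "m < v"
      then have "v - 1 - (v - 1 - m) = m" by simp
      then show "\<gamma> m = \<beta> m" using h[rule_format, of "v - 1 - m"] m by simp
    qed
  qed
  also have "\<dots> \<longleftrightarrow> (\<forall>l<v. rr A B (j,l) \<bullet> x = (if \<beta> (v - 1 - l) then 1 else 0))"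
  proof -
    have "\<gamma> (v - 1 - l) = \<beta> (v - 1 - l) \<longleftrightarrow> rr A B (j,l) \<bullet> x = (if \<beta> (v - 1 - l) then 1 else 0)"
      if l: "l < v" for l
    proof -
      have "v - 1 - (v - 1 - l) = l" using l by simp
      then have "\<gamma> (v - 1 - l) = (outp A B x j l = 1)" unfolding \<gamma>_def by simp
      moreover have "outp A B x j l = rr A B (j,l) \<bullet> x" using outp_rr[OF A B x] l vw by simp
      ultimately show ?thesis using bit_eq_1_iff by simp
    qed
    then show ?thesis by blast
  qed
  finally show ?thesis .
qed

lemma real_card_powr:
  assumes "(N::nat) * 2 ^ a = 2 ^ b"
  shows "real N = 2 powr (real b - real a)"
proof -
  have "real N * 2 ^ a = 2 ^ b" using arg_cong[OF assms, of real] by simp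
  then have "real N = 2 ^ b / 2 ^ a" by (simp add: field_simps)
  also have "\<dots> = 2 powr (real b - real a)" by (simp add: powr_diff powr_realpow)
  finally show ?thesis .
qed

lemma equidist_iff:
  assumes A: "A \<in> carrier_mat p p" and B: "B \<in> carrier_mat w p" and vw: "v \<le> w"
  shows "equidist p A B w v k \<longleftrightarrow> indep p (rr A B) ({..<k} \<times> {..<v})"
proof
  assume eq: "equidist p A B w v k"
  show "indep p (rr A B) ({..<k} \<times> {..<v})"
  proof (rule fib_nonempty_indep)
    fix t :: "nat \<times> nat \<Rightarrow> bit"
    define c where "c j = int (enc v (\<lambda>m. t (j, v - 1 - m) = 1))" for j
    have cv: "\<forall>j<k. 0 \<le> c j \<and> c j < 2 ^ v" unfolding c_def using enc_lt
      by (metis of_nat_0_le_iff of_nat_less_numeral_power_cancel_iff)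
    have S: "{x \<in> carrier_vec p. \<forall>j<k. cell v (uval A B w x j) = c j} = fib p (rr A B) ({..<k} \<times> {..<v}) t"
    proof -
      have "(\<forall>j<k. cell v (uval A B w x j) = c j) \<longleftrightarrow> (\<forall>jl\<in>{..<k} \<times> {..<v}. rr A B jl \<bullet> x = t jl)"
        if x: "x \<in> carrier_vec p" for x
      proof -
        have e: "(if t (j, v - 1 - (v - 1 - l)) = 1 then 1 else 0) = t (j, l)" if "l < v" for j l
        proof -
          have "v - 1 - (v - 1 - l) = l" using that by simp
          then show ?thesis by (cases "t (j,l)") auto
        qed
        have "(\<forall>j<k. cell v (uval A B w x j) = c j) \<longleftrightarrow> (\<forall>j<k. \<forall>l<v. rr A B (j,l) \<bullet> x = t (j,l))"
          unfolding c_def cell_iff[OF A B x vw] using e by simp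
        then show ?thesis by auto
      qed
      then show ?thesis unfolding fib_def by auto
    qed
    have "real (card {x \<in> carrier_vec p. \<forall>j<k. cell v (uval A B w x j) = c j}) = 2 powr (real p - real k * real v)"
      using eq cv unfolding equidist_def by blast
    then have "real (card (fib p (rr A B) ({..<k} \<times> {..<v}) t)) > 0" unfolding S by simp
    then have "card (fib p (rr A B) ({..<k} \<times> {..<v}) t) \<noteq> 0" by linarith
    then show "fib p (rr A B) ({..<k} \<times> {..<v}) t \<noteq> {}" by auto
  qed simp
next
  assume ind: "indep p (rr A B) ({..<k} \<times> {..<v})"
  show "equidist p A B w v k"
    unfolding equidist_def
  proof (intro allI impI)
    fix c :: "nat \<Rightarrow> int" assume cv: "\<forall>j<k. 0 \<le> c j \<and> c j < 2 ^ v"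
    define \<beta> where "\<beta> j = (SOME \<beta>. enc v \<beta> = nat (c j))" for j
    have b: "int (enc v (\<beta> j)) = c j" if "j < k" for j
    proof -
      have c0: "0 \<le> c j" "c j < 2 ^ v" using cv that by auto
      then have "nat (c j) < 2 ^ v" by (metis nat_less_iff of_nat_numeral of_nat_power)
      then have "\<exists>\<beta>. enc v \<beta> = nat (c j)" by (rule enc_surj)
      then have "enc v (\<beta> j) = nat (c j)" unfolding \<beta>_def by (rule someI_ex)
      then show ?thesis using c0 by simp
    qed
    define t where "t jl = (if \<beta> (fst jl) (v - 1 - snd jl) then (1::bit) else 0)" for jl
    have S: "{x \<in> carrier_vec p. \<forall>j<k. cell v (uval A B w x j) = c j} = fib p (rr A B) ({..<k} \<times> {..<v}) t"
    proof -
      have "(\<forall>j<k. cell v (uval A B w x j) = c j) \<longleftrightarrow> (\<forall>jl\<in>{..<k} \<times> {..<v}. rr A B jl \<bullet> x = t jl)"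
        if x: "x \<in> carrier_vec p" for x
      proof -
        have "(\<forall>j<k. cell v (uval A B w x j) = c j) \<longleftrightarrow> (\<forall>j<k. cell v (uval A B w x j) = int (enc v (\<beta> j)))"
          using b by auto
        also have "\<dots> \<longleftrightarrow> (\<forall>j<k. \<forall>l<v. rr A B (j,l) \<bullet> x = t (j,l))"
          unfolding cell_iff[OF A B x vw] t_def by simp
        finally show ?thesis by auto
      qed
      then show ?thesis unfolding fib_def by auto
    qed
    have "card (fib p (rr A B) ({..<k} \<times> {..<v}) t) * 2 ^ card ({..<k} \<times> {..<v}) = 2 ^ p"
      using ind rr_carrier[OF A B] by (intro count_fib) auto
    then have "card (fib p (rr A B) ({..<k} \<times> {..<v}) t) * 2 ^ (k * v) = 2 ^ p"
      by (simp add: card_cartesian_product)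
    then have "real (card (fib p (rr A B) ({..<k} \<times> {..<v}) t)) = 2 powr (real p - real (k * v))"
      by (rule real_card_powr)
    then show "real (card {x \<in> carrier_vec p. \<forall>j<k. cell v (uval A B w x j) = c j}) = 2 powr (real p - real k * real v)"
      unfolding S by simp
  qed
qed


declare add_bit_eq_xor[simp del] mult_bit_eq_and[simp del]

lemma pow_mat_add:
  assumes A: "A \<in> carrier_mat n n"
  shows "A ^\<^sub>m (i + j) = A ^\<^sub>m j * A ^\<^sub>m i"
proof (induct j)
  case 0 then show ?case using A pow_mat_carrier''[OF A, of i] by simp
next
  case (Suc j)
  have "A ^\<^sub>m (i + Suc j) = A * A ^\<^sub>m (i + j)" using pow_mat_Suc_left[OF A] by simp
  also have "\<dots> = A * (A ^\<^sub>m j * A ^\<^sub>m i)" using Suc by simp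
  also have "\<dots> = (A * A ^\<^sub>m j) * A ^\<^sub>m i"
    by (rule assoc_mult_mat[OF A pow_mat_carrier''[OF A] pow_mat_carrier''[OF A], symmetric])
  also have "\<dots> = A ^\<^sub>m Suc j * A ^\<^sub>m i" using pow_mat_Suc_left[OF A] by simp
  finally show ?case .
qed

lemma outp_shift:
  assumes A: "A \<in> carrier_mat p p" and x0: "x0 \<in> carrier_vec p"
  shows "outp A B x0 (i + j) l = outp A B (A ^\<^sub>m i *\<^sub>v x0) j l"
  unfolding outp_def state_def pow_mat_add[OF A]
  using assoc_mult_mat_vec[OF pow_mat_carrier''[OF A] pow_mat_carrier''[OF A] x0] by simp

lemma sum_conv:
  assumes A: "A \<in> carrier_mat p p" and B: "B \<in> carrier_mat w p" and x0: "x0 \<in> carrier_vec p"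
    and vw: "v \<le> w"
  shows "(\<Sum>l=1..v. \<Sum>j=0..K. W j (l - 1) * outp A B x0 (i + j) (l - 1))
       = (\<Sum>jl\<in>{..<Suc K} \<times> {..<v}. W (fst jl) (snd jl) * (rr A B jl \<bullet> (A ^\<^sub>m i *\<^sub>v x0)))"
proof -
  define y where "y = A ^\<^sub>m i *\<^sub>v x0"
  have y: "y \<in> carrier_vec p" unfolding y_def by (rule mult_mat_vec_carrier[OF pow_mat_carrier''[OF A] x0])
  have "(\<Sum>l=1..v. \<Sum>j=0..K. W j (l - 1) * outp A B x0 (i + j) (l - 1))
      = (\<Sum>l<v. \<Sum>j=0..K. W j l * outp A B x0 (i + j) l)"
    by (rule sum.reindex_bij_witness[of _ Suc "\<lambda>l. l - 1"]) auto
  also have "\<dots> = (\<Sum>l<v. \<Sum>j<Suc K. W j l * (rr A B (j,l) \<bullet> y))"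
  proof (intro sum.cong)
    fix l j assume l: "l \<in> {..<v}" and j: "j \<in> {..<Suc K}"
    have "outp A B x0 (i + j) l = outp A B y j l" unfolding y_def by (rule outp_shift[OF A x0])
    also have "\<dots> = rr A B (j,l) \<bullet> y" using outp_rr[OF A B y] l vw by simp
    finally show "W j l * outp A B x0 (i + j) l = W j l * (rr A B (j,l) \<bullet> y)" by simp
  qed (auto simp: atLeast0AtMost lessThan_Suc_atMost)
  also have "\<dots> = (\<Sum>j<Suc K. \<Sum>l<v. W j l * (rr A B (j,l) \<bullet> y))" by (rule sum.swap)
  also have "\<dots> = (\<Sum>jl\<in>{..<Suc K} \<times> {..<v}. W (fst jl) (snd jl) * (rr A B jl \<bullet> y))"
    by (simp add: sum.cartesian_product split_beta)
  finally show ?thesis unfolding y_def .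
qed

theorem mainTheorem2:
  fixes p w v :: nat and A B :: "bit mat" and x0 :: "bit vec"
  assumes "A \<in> carrier_mat p p" and "B \<in> carrier_mat w p" and "x0 \<in> carrier_vec p"
    and "1 \<le> v" and "v \<le> w"
    and "primitive_poly p (char_poly A)"
    and "x0 \<noteq> 0\<^sub>v p"
    and "hpoly p A B x0 0 \<noteq> 0"
  shows "(\<exists>W :: nat \<Rightarrow> nat \<Rightarrow> bit.
            (\<exists>j\<le>kv p A B w v. \<exists>l\<in>{1..v}. W j (l - 1) \<noteq> 0) \<and>
            (\<forall>i. (\<Sum>l=1..v. \<Sum>j=0..kv p A B w v. W j (l - 1) * outp A B x0 (i + j) (l - 1)) = 0))
       \<and> (\<forall>k < kv p A B w v. \<forall>W :: nat \<Rightarrow> nat \<Rightarrow> bit.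
            (\<forall>i. (\<Sum>l=1..v. \<Sum>j=0..k. W j (l - 1) * outp A B x0 (i + j) (l - 1)) = 0) \<longrightarrow>
            (\<forall>j\<le>k. \<forall>l\<in>{1..v}. W j (l - 1) = 0))"
proof -
  note A = assms(1) and B = assms(2) and x0 = assms(3) and v1 = assms(4) and vw = assms(5)
  have deg: "degree (char_poly A) = p" and irr: "irreducible (char_poly A)"
    using assms(6) unfolding primitive_poly_def by auto
  let ?r = "rr A B"
  let ?E = "equidist p A B w v"
  define K where "K = kv p A B w v"
  have rc: "\<forall>jl\<in>I. ?r jl \<in> carrier_vec p" for I using rr_carrier[OF A B] by blast
  have E0: "?E 0" unfolding equidist_iff[OF A B vw] indep_def by simp
  have bound: "k \<le> p" if "?E k" for k
  proof -
    have ind: "indep p ?r ({..<k} \<times> {..<v})" using that equidist_iff[OF A B vw] by blast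
    have "card (fib p ?r ({..<k} \<times> {..<v}) (\<lambda>_. 0)) * 2 ^ card ({..<k} \<times> {..<v}) = 2 ^ p"
      by (rule count_fib[OF _ rc ind]) simp
    then have e: "card (fib p ?r ({..<k} \<times> {..<v}) (\<lambda>_. 0)) * 2 ^ (k * v) = 2 ^ p"
      by (simp add: card_cartesian_product)
    have nz: "card (fib p ?r ({..<k} \<times> {..<v}) (\<lambda>_. 0)) \<noteq> 0"
    proof
      assume "card (fib p ?r ({..<k} \<times> {..<v}) (\<lambda>_. 0)) = 0"
      then show False using e by simp
    qed
    have "(2::nat) ^ (k * v) \<le> card (fib p ?r ({..<k} \<times> {..<v}) (\<lambda>_. 0)) * 2 ^ (k * v)"
      using nz by simp
    then have "(2::nat) ^ (k * v) \<le> 2 ^ p" using e by simp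
    then have "k * v \<le> p" by simp
    moreover have "k \<le> k * v" using v1 by (simp add: Suc_le_eq)
    ultimately show ?thesis by linarith
  qed
  have EK: "?E K" unfolding K_def kv_def by (rule GreatestI_nat[where P = "?E", OF E0 bound])
  have nES: "\<not> ?E (Suc K)"
  proof
    assume "?E (Suc K)"
    then have "Suc K \<le> K" unfolding K_def kv_def by (rule Greatest_le_nat[where P = "?E", OF _ bound])
    then show False by simp
  qed
  have indK: "indep p ?r ({..<K} \<times> {..<v})" using EK equidist_iff[OF A B vw] by blast
  have nindS: "\<not> indep p ?r ({..<Suc K} \<times> {..<v})" using nES equidist_iff[OF A B vw] by blast
  have Ay: "A ^\<^sub>m i *\<^sub>v x0 \<in> carrier_vec p" for i by (rule mult_mat_vec_carrier[OF pow_mat_carrier''[OF A] x0])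
  have part1: "\<exists>W :: nat \<Rightarrow> nat \<Rightarrow> bit.
            (\<exists>j\<le>K. \<exists>l\<in>{1..v}. W j (l - 1) \<noteq> 0) \<and>
            (\<forall>i. (\<Sum>l=1..v. \<Sum>j=0..K. W j (l - 1) * outp A B x0 (i + j) (l - 1)) = 0)"
  proof -
    obtain c where c0: "\<forall>x\<in>(carrier_vec p :: bit vec set). (\<Sum>jl\<in>{..<Suc K} \<times> {..<v}. c jl * (?r jl \<bullet> x)) = 0"
      and cnz: "\<exists>jl\<in>{..<Suc K} \<times> {..<v}. c jl \<noteq> 0"
      using nindS unfolding indep_def by blast
    define W where "W j l = c (j,l)" for j l
    from cnz obtain j l where jl: "j < Suc K" "l < v" "c (j,l) \<noteq> 0" by auto
    have "\<exists>j\<le>K. \<exists>l\<in>{1..v}. W j (l - 1) \<noteq> 0"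
      using jl by (intro exI[of _ j] conjI bexI[of _ "Suc l"]) (auto simp: W_def)
    moreover have "\<forall>i. (\<Sum>l=1..v. \<Sum>j=0..K. W j (l - 1) * outp A B x0 (i + j) (l - 1)) = 0"
    proof
      fix i
      show "(\<Sum>l=1..v. \<Sum>j=0..K. W j (l - 1) * outp A B x0 (i + j) (l - 1)) = 0"
      proof -
        have "(\<Sum>l=1..v. \<Sum>j=0..K. W j (l - 1) * outp A B x0 (i + j) (l - 1))
          = (\<Sum>jl\<in>{..<Suc K} \<times> {..<v}. W (fst jl) (snd jl) * (rr A B jl \<bullet> (A ^\<^sub>m i *\<^sub>v x0)))"
          by (rule sum_conv[OF A B x0 vw])
        also have "\<dots> = (\<Sum>jl\<in>{..<Suc K} \<times> {..<v}. c jl * (rr A B jl \<bullet> (A ^\<^sub>m i *\<^sub>v x0)))"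
          unfolding W_def by simp
        also have "\<dots> = 0" using c0 Ay[of i] by blast
        finally show ?thesis .
      qed
    qed
    ultimately show ?thesis by blast
  qed
  have part2: "\<forall>k < K. \<forall>W :: nat \<Rightarrow> nat \<Rightarrow> bit.
            (\<forall>i. (\<Sum>l=1..v. \<Sum>j=0..k. W j (l - 1) * outp A B x0 (i + j) (l - 1)) = 0) \<longrightarrow>
            (\<forall>j\<le>k. \<forall>l\<in>{1..v}. W j (l - 1) = 0)"
  proof (rule allI, rule impI, rule allI, rule impI)
    fix k W assume kK: "k < K"
      and rel: "\<forall>i. (\<Sum>l=1..v. \<Sum>j=0..k. W j (l - 1) * outp A B x0 (i + j) (l - 1)) = 0"
    let ?I = "{..<Suc k} \<times> {..<v}"
    have indk: "indep p ?r ?I"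
      by (rule indep_subset[OF indK]) (use kK in auto)
    define f where "f = vec p (\<lambda>q. \<Sum>jl\<in>?I. W (fst jl) (snd jl) * (?r jl $ q))"
    have fc: "f \<in> carrier_vec p" unfolding f_def by simp
    have fx: "f \<bullet> x = (\<Sum>jl\<in>?I. W (fst jl) (snd jl) * (?r jl \<bullet> x))" if x: "x \<in> carrier_vec p" for x
    proof -
      have "f \<bullet> x = x \<bullet> f" by (rule comm_scalar_prod[OF fc x])
      also have "\<dots> = (\<Sum>jl\<in>?I. W (fst jl) (snd jl) * (x \<bullet> ?r jl))"
        unfolding f_def by (rule scalar_prod_lincomb[OF x]) (use rc in blast)
      also have "\<dots> = (\<Sum>jl\<in>?I. W (fst jl) (snd jl) * (?r jl \<bullet> x))"
        by (intro sum.cong refl) (simp add: comm_scalar_prod[OF x rr_carrier[OF A B]])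
      finally show ?thesis .
    qed
    have orth: "\<forall>i. f \<bullet> (A ^\<^sub>m i *\<^sub>v x0) = 0"
    proof
      fix i
      show "f \<bullet> (A ^\<^sub>m i *\<^sub>v x0) = 0"
        using fx[OF Ay[of i]] rel sum_conv[OF A B x0 vw, where K=k and W=W and i=i] by simp
    qed
    have "f = 0\<^sub>v p"
      by (rule cyc.cyclic[OF cyc.intro[OF A fc] deg irr x0 assms(7) orth])
    then have "\<forall>x\<in>(carrier_vec p :: bit vec set). (\<Sum>jl\<in>?I. (\<lambda>jl. W (fst jl) (snd jl)) jl * (?r jl \<bullet> x)) = 0"
      using fx by (simp add: scalar_prod_left_zero)
    then have W0': "\<forall>jl\<in>?I. (\<lambda>jl. W (fst jl) (snd jl)) jl = 0"
      by (rule mp[OF indk[unfolded indep_def, THEN spec[of _ "\<lambda>jl. W (fst jl) (snd jl)"]]])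
    then have W0: "\<forall>jl\<in>?I. W (fst jl) (snd jl) = 0" by simp
    show "\<forall>j\<le>k. \<forall>l\<in>{1..v}. W j (l - 1) = 0"
    proof (intro allI impI ballI)
      fix j l assume "j \<le> k" "l \<in> {1..v}"
      then have "(j, l - 1) \<in> ?I" by auto
      then show "W j (l - 1) = 0" using W0 by fastforce
    qed
  qed
  show ?thesis using part1 part2 unfolding K_def by blast
qed


end
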